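(* Let $a,\lambda\in\mathbb{R}^n$ with $\|a\|=\|\lambda\|=1$ and $\lambda\neq\pm a$, and let $d\in\mathbb{R}^m$ with $\|d\|\le1$. Fix $y\in\mathbb{R}^m$. The Lagrangian dual of $$(P)\qquad \max_x\{\lambda^\mathsf{T} x:\|x\|\le\|y\|,\ a^\mathsf{T} x+d^\mathsf{T} y\le0\}$$ is $$(D)\qquad \inf_\theta\{\|\lambda-\theta a\|\,\|y\|-\theta\,d^\mathsf{T} y:\theta\ge0\}.$$ An optimal solution of $(P)$ is $x(y)=\lambda\|y\|$ if $\lambda^\mathsf{T} a\|y\|+d^\mathsf{T} y\le0$, and otherwise $$x(y)=\sqrt{\tfrac{\|y\|^2-(d^\mathsf{T} y)^2}{1-(\lambda^\mathsf{T} a)^2}}\,\lambda-\Big(d^\mathsf{T} y+\lambda^\mathsf{T} a\sqrt{\tfrac{\|y\|^2-(d^\mathsf{T} y)^2}{1-(\lambda^\mathsf{T} a)^2}}\Big)a.$$ An optimal dual solution (with values in $\mathbb{R}_+\cup\{+\infty\}$) is $\theta(y)=0$ if $\lambda^\mathsf{T} a\|y\|+d^\mathsf{T} y\le0$, and otherwise $$\theta(y)=\lambda^\mathsf{T} a+d^\mathsf{T} y\,\frac{\sqrt{1-(\lambda^\mathsf{T} a)^2}}{\sqrt{\|y\|^2-(d^\mathsf{T} y)^2}},$$ with the conventions $1/0=+\infty$ and $r+(+\infty)=+\infty$ (a dual value at $\theta=+\infty$ meaning the limit as $\theta\to+\infty$). Strong duality holds, i.e. the optimal values of $(P)$ and $(D)$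 coincide, and the optimal value of $(P)$ equals $\|y\|$ if $\lambda^\mathsf{T} a\|y\|+d^\mathsf{T} y\le0$ and $\sqrt{(\|y\|^2-(d^\mathsf{T} y)^2)(1-(\lambda^\mathsf{T} a)^2)}-d^\mathsf{T} y\,\lambda^\mathsf{T} a$ otherwise. Finally, this formula for the optimal value of $(P)$ also holds when $\lambda=\pm a$.
   Context: $\|\cdot\|$ is the Euclidean norm. *)

theory Defs
  imports "HOL-Analysis.Analysis" "HOL-Library.Extended_Real"
begin

definition primal_feasible :: "real^'n \<Rightarrow> real^'m \<Rightarrow> real^'m \<Rightarrow> real^'n \<Rightarrow> bool" where
  "primal_feasible a d y x \<longleftrightarrow> norm x \<le> norm y \<and> a \<bullet> x + d \<bullet> y \<le> 0"

definition primal_value :: "real^'n \<Rightarrow> real^'n \<Rightarrow> real^'m \<Rightarrow> real^'m \<Rightarrow> real" where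
  "primal_value a lam d y = Sup {lam \<bullet> x | x. primal_feasible a d y x}"

definition primal_optimal :: "real^'n \<Rightarrow> real^'n \<Rightarrow> real^'m \<Rightarrow> real^'m \<Rightarrow> real^'n \<Rightarrow> bool" where
  "primal_optimal a lam d y x \<longleftrightarrow> primal_feasible a d y x \<and>
     (\<forall>x'. primal_feasible a d y x' \<longrightarrow> lam \<bullet> x' \<le> lam \<bullet> x)"

definition lagrangian :: "real^'n \<Rightarrow> real^'n \<Rightarrow> real^'m \<Rightarrow> real^'m \<Rightarrow> real^'n \<Rightarrow> real \<Rightarrow> real" where
  "lagrangian a lam d y x \<theta> = lam \<bullet> x - \<theta> * (a \<bullet> x + d \<bullet> y)"

definition lagrange_dual_fun :: "real^'n \<Rightarrow> real^'n \<Rightarrow> real^'m \<Rightarrow> real^'m \<Rightarrow> real \<Rightarrow> real" where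
  "lagrange_dual_fun a lam d y \<theta> = Sup {lagrangian a lam d y x \<theta> | x. norm x \<le> norm y}"

definition dual_obj :: "real^'n \<Rightarrow> real^'n \<Rightarrow> real^'m \<Rightarrow> real^'m \<Rightarrow> real \<Rightarrow> real" where
  "dual_obj a lam d y \<theta> = norm (lam - \<theta> *\<^sub>R a) * norm y - \<theta> * (d \<bullet> y)"

definition dual_value :: "real^'n \<Rightarrow> real^'n \<Rightarrow> real^'m \<Rightarrow> real^'m \<Rightarrow> real" where
  "dual_value a lam d y = Inf {dual_obj a lam d y \<theta> | \<theta>. \<theta> \<ge> 0}"

text \<open>Optimality of a dual point in R_+ \<union> {+\<infinity>}; the dual value at +\<infinity> is the limit
  of the dual objective as theta tends to +\<infinity>.\<close>
definition dual_optimal :: "real^'n \<Rightarrow> real^'n \<Rightarrow> real^'m \<Rightarrow> real^'m \<Rightarrow> ereal \<Rightarrow> bool" where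
  "dual_optimal a lam d y \<Theta> \<longleftrightarrow>
     (\<exists>t. \<Theta> = ereal t \<and> t \<ge> 0 \<and> (\<forall>s\<ge>0. dual_obj a lam d y t \<le> dual_obj a lam d y s)) \<or>
     (\<Theta> = \<infinity> \<and> (\<exists>v. (dual_obj a lam d y \<longlongrightarrow> v) at_top \<and> (\<forall>s\<ge>0. v \<le> dual_obj a lam d y s)))"

definition x_opt :: "real^'n \<Rightarrow> real^'n \<Rightarrow> real^'m \<Rightarrow> real^'m \<Rightarrow> real^'n" where
  "x_opt a lam d y =
     (if (lam \<bullet> a) * norm y + d \<bullet> y \<le> 0 then norm y *\<^sub>R lam
      else (let r = sqrt ((norm y ^ 2 - (d \<bullet> y) ^ 2) / (1 - (lam \<bullet> a) ^ 2))
            in r *\<^sub>R lam - (d \<bullet> y + (lam \<bullet> a) * r) *\<^sub>R a))"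

text \<open>The explicit dual solution theta(y), in extended reals (ereal arithmetic realizes the
  conventions 1/0 = +\<infinity> and r + \<infinity> = \<infinity>).\<close>
definition theta_opt :: "real^'n \<Rightarrow> real^'n \<Rightarrow> real^'m \<Rightarrow> real^'m \<Rightarrow> ereal" where
  "theta_opt a lam d y =
     (if (lam \<bullet> a) * norm y + d \<bullet> y \<le> 0 then 0
      else ereal (lam \<bullet> a) + ereal (d \<bullet> y) *
             (ereal (sqrt (1 - (lam \<bullet> a) ^ 2)) / ereal (sqrt (norm y ^ 2 - (d \<bullet> y) ^ 2))))"

definition opt_value_formula :: "real^'n \<Rightarrow> real^'n \<Rightarrow> real^'m \<Rightarrow> real^'m \<Rightarrow> real" where
  "opt_value_formula a lam d y =
     (if (lam \<bullet> a) * norm y + d \<bullet> y \<le> 0 then norm y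
      else sqrt ((norm y ^ 2 - (d \<bullet> y) ^ 2) * (1 - (lam \<bullet> a) ^ 2)) - (d \<bullet> y) * (lam \<bullet> a))"

end

theory Submission
  imports Defs "HOL-Real_Asymp.Real_Asymp"
begin

lemma weak_dual:
  assumes "primal_feasible a d y x" "\<theta> \<ge> 0"
  shows "lam \<bullet> x \<le> dual_obj a lam d y \<theta>"
proof -
  have f: "norm x \<le> norm y" "a \<bullet> x + d \<bullet> y \<le> 0" using assms(1) by (auto simp: primal_feasible_def)
  have "lam \<bullet> x \<le> lam \<bullet> x - \<theta> * (a \<bullet> x + d \<bullet> y)"
    using f(2) assms(2) by (simp add: mult_nonneg_nonpos)
  also have "\<dots> = (lam - \<theta> *\<^sub>R a) \<bullet> x - \<theta> * (d \<bullet> y)" by (simp add: inner_diff_left algebra_simps)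
  also have "\<dots> \<le> norm (lam - \<theta> *\<^sub>R a) * norm y - \<theta> * (d \<bullet> y)"
  proof -
    have "(lam - \<theta> *\<^sub>R a) \<bullet> x \<le> norm (lam - \<theta> *\<^sub>R a) * norm x" by (rule norm_cauchy_schwarz)
    also have "\<dots> \<le> norm (lam - \<theta> *\<^sub>R a) * norm y" using f(1) by (simp add: mult_left_mono)
    finally show ?thesis by simp
  qed
  finally show ?thesis by (simp add: dual_obj_def)
qed

lemma dual_fun: "lagrange_dual_fun a lam d y \<theta> = dual_obj a lam d y \<theta>"
proof -
  define w where "w = lam - \<theta> *\<^sub>R a"
  have L: "lagrangian a lam d y x \<theta> = w \<bullet> x - \<theta> * (d \<bullet> y)" for x
    by (simp add: lagrangian_def w_def inner_diff_left algebra_simps)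
  define x0 where "x0 = (if w = 0 then 0 else (norm y / norm w) *\<^sub>R w)"
  have x0n: "norm x0 \<le> norm y" by (auto simp: x0_def)
  have x0v: "w \<bullet> x0 = norm w * norm y"
    by (auto simp: x0_def power2_norm_eq_inner[symmetric] power2_eq_square)
  show ?thesis unfolding lagrange_dual_fun_def
  proof (rule cSup_eq_maximum)
    show "dual_obj a lam d y \<theta> \<in> {lagrangian a lam d y x \<theta> |x. norm x \<le> norm y}"
      using x0n x0v by (auto simp: L dual_obj_def w_def intro!: exI[of _ x0])
  next
    fix z assume "z \<in> {lagrangian a lam d y x \<theta> |x. norm x \<le> norm y}"
    then obtain x where x: "norm x \<le> norm y" "z = w \<bullet> x - \<theta> * (d \<bullet> y)" by (auto simp: L)
    have "w \<bullet> x \<le> norm w * norm x" by (rule norm_cauchy_schwarz)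
    also have "\<dots> \<le> norm w * norm y" using x(1) by (simp add: mult_left_mono)
    finally show "z \<le> dual_obj a lam d y \<theta>" using x by (simp add: dual_obj_def w_def)
  qed
qed

lemma primal_val:
  assumes "primal_feasible a d y x0" "lam \<bullet> x0 = V"
    and "\<And>x. primal_feasible a d y x \<Longrightarrow> lam \<bullet> x \<le> V"
  shows "primal_value a lam d y = V"
  unfolding primal_value_def
  by (rule cSup_eq_maximum) (use assms in auto)


theorem propositionA1:
  fixes a lam :: "real^'n" and d y :: "real^'m"
  assumes "norm a = 1" and "norm lam = 1" and "norm d \<le> 1"
  shows "(lam \<noteq> a \<and> lam \<noteq> - a \<longrightarrow>
            (\<forall>\<theta>\<ge>0. lagrange_dual_fun a lam d y \<theta> = dual_obj a lam d y \<theta>) \<and>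
            primal_optimal a lam d y (x_opt a lam d y) \<and>
            dual_optimal a lam d y (theta_opt a lam d y) \<and>
            primal_value a lam d y = dual_value a lam d y) \<and>
         primal_value a lam d y = opt_value_formula a lam d y"
proof -
  define c where "c = lam \<bullet> a"
  define s where "s = d \<bullet> y"
  define R where "R = norm y"
  define V where "V = opt_value_formula a lam d y"
  have aa: "a \<bullet> a = 1" using assms(1) by (simp add: norm_eq_sqrt_inner)
  have ll: "lam \<bullet> lam = 1" using assms(2) by (simp add: norm_eq_sqrt_inner)
  have R0: "R \<ge> 0" by (simp add: R_def)
  have cb: "\<bar>c\<bar> \<le> 1" using Cauchy_Schwarz_ineq2[of lam a] assms by (simp add: c_def)
  have sb: "\<bar>s\<bar> \<le> R"
  proof -
    have "\<bar>s\<bar> \<le> norm d * norm y" using Cauchy_Schwarz_ineq2[of d y] by (simp add: s_def)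
    also have "\<dots> \<le> 1 * norm y" using assms(3) by (intro mult_right_mono) auto
    finally show ?thesis by (simp add: R_def)
  qed
  have nlt: "norm (lam - t *\<^sub>R a) = sqrt (1 - 2*t*c + t^2)" for t
    by (simp add: norm_eq_sqrt_inner inner_diff inner_commute aa ll c_def power2_eq_square algebra_simps)
  have dob: "dual_obj a lam d y t = sqrt (1 - 2*t*c + t^2) * R - t * s" for t
    by (simp add: dual_obj_def nlt R_def s_def)
  have feas: "primal_feasible a d y x \<longleftrightarrow> norm x \<le> R \<and> a \<bullet> x + s \<le> 0" for x
    by (simp add: primal_feasible_def R_def s_def)
  have lam_a: "lam = a" if "c = 1"
  proof -
    have "(norm (lam - a))^2 = 0" using that
      by (simp add: power2_norm_eq_inner inner_diff inner_commute aa ll c_def)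
    then show ?thesis by simp
  qed
  have lam_ma: "lam = - a" if "c = - 1"
  proof -
    have "(norm (lam + a))^2 = 0" using that
      by (simp add: power2_norm_eq_inner inner_add inner_commute aa ll c_def)
    then show ?thesis by (simp add: add_eq_0_iff2)
  qed

  have dualfun: "\<forall>\<theta>\<ge>0. lagrange_dual_fun a lam d y \<theta> = dual_obj a lam d y \<theta>"
    by (simp add: dual_fun)
  show ?thesis
  proof (cases "c * R + s \<le> 0")
    case C: True
    have xo: "x_opt a lam d y = R *\<^sub>R lam" using C by (simp add: x_opt_def c_def R_def s_def)
    have th: "theta_opt a lam d y = 0" using C by (simp add: theta_opt_def c_def R_def s_def)
    have Vv: "V = R" using C by (simp add: V_def opt_value_formula_def c_def R_def s_def)
    have d0: "dual_obj a lam d y 0 = R" by (simp add: dob)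
    have xf: "primal_feasible a d y (R *\<^sub>R lam)"
      using C R0 assms(2) by (simp add: feas c_def inner_commute algebra_simps)
    have xv: "lam \<bullet> (R *\<^sub>R lam) = R" by (simp add: ll)
    have ub: "lam \<bullet> x \<le> R" if "primal_feasible a d y x" for x
      using weak_dual[OF that, of 0 lam] d0 by simp
    have pv: "primal_value a lam d y = R" by (rule primal_val[OF xf xv ub])
    have dopt: "\<forall>t\<ge>0. dual_obj a lam d y 0 \<le> dual_obj a lam d y t"
      using weak_dual[OF xf, of _ lam] xv d0 ll by simp
    have dv: "dual_value a lam d y = R" unfolding dual_value_def
      by (rule cInf_eq_minimum) (use dopt d0 in auto)
    show ?thesis using pv dv dopt xf xv ub dualfun Vv
      by (auto simp: xo th primal_optimal_def dual_optimal_def V_def intro!: exI[of _ 0])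
  next
    case C: False
    have Vv: "V = sqrt ((R^2 - s^2) * (1 - c^2)) - s * c"
      using C by (simp add: V_def opt_value_formula_def c_def R_def s_def)
    show ?thesis
    proof (cases "c^2 < 1")
      case c1: True
      define p where "p = sqrt (1 - c^2)"
      define q where "q = sqrt (R^2 - s^2)"
      have p0: "p > 0" using c1 by (simp add: p_def)
      have pp: "p^2 = 1 - c^2" using c1 by (simp add: p_def)
      have sR2: "s^2 \<le> R^2"
      proof -
        have "\<bar>s\<bar>^2 \<le> R^2" using sb by (intro power_mono) auto
        then show ?thesis by simp
      qed
      have q0: "q \<ge> 0" using sR2 by (simp add: q_def)
      have qq: "q^2 = R^2 - s^2" using sR2 by (simp add: q_def)
      have Vv2: "V = q * p - s * c" using Vv by (simp add: p_def q_def real_sqrt_mult)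
      define r where "r = q / p"
      have rr: "sqrt ((R^2 - s^2) / (1 - c^2)) = r"
        by (simp add: r_def p_def q_def real_sqrt_divide)
      define x0 where "x0 = r *\<^sub>R lam - (s + c * r) *\<^sub>R a"
      have xo: "x_opt a lam d y = x0" using C
        by (simp add: x_opt_def x0_def rr[symmetric] c_def R_def s_def Let_def)
      have n2: "(norm x0)^2 = R^2"
      proof -
        have al: "a \<bullet> lam = c" by (simp add: c_def inner_commute)
        have "(norm x0)^2 = r^2 - 2*r*(s + c*r)*c + (s + c*r)^2"
          unfolding power2_norm_eq_inner x0_def
          by (simp add: inner_diff_left inner_diff_right al c_def[symmetric] aa ll
              power2_eq_square algebra_simps)
        also have "\<dots> = r^2 * (1 - c^2) + s^2" by (simp add: power2_eq_square algebra_simps)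
        also have "r^2 * (1 - c^2) = q^2" using p0 by (simp add: r_def pp[symmetric] power_divide)
        finally show ?thesis using qq by simp
      qed
      have xf: "primal_feasible a d y x0"
      proof -
        have "norm x0 = R" using n2 R0 by (simp add: power2_eq_iff_nonneg)
        moreover have "a \<bullet> x0 = - s"
          by (simp add: x0_def inner_diff_right aa c_def inner_commute algebra_simps)
        ultimately show ?thesis by (simp add: feas)
      qed
      have xv: "lam \<bullet> x0 = V"
      proof -
        have "lam \<bullet> x0 = r - c * (s + c * r)" by (simp add: x0_def inner_diff_right ll c_def)
        also have "\<dots> = r * p^2 - s * c" unfolding pp by (simp add: algebra_simps power2_eq_square)
        also have "r * p^2 = q * p" using p0 by (simp add: r_def power2_eq_square)
        finally show ?thesis using Vv2 by simp
      qed
      show ?thesis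
      proof (cases "q > 0")
        case q1: True
        define t where "t = c + s * p / q"
        have t0: "t \<ge> 0"
        proof -
          have "c * q + s * p \<ge> 0"
          proof (cases "c \<ge> 0 \<and> s \<ge> 0")
            case True then show ?thesis using p0 q0 by simp
          next
            case False
            have sq: "s^2 \<le> c^2 * R^2 \<or> c^2 * R^2 \<le> s^2" by linarith
            show ?thesis
            proof (cases "c < 0")
              case True
              have "s > - c * R" using C by simp
              have "-c*R \<ge> 0" using True R0 by (simp add: mult_nonpos_nonneg)
              then have "s \<ge> 0" using \<open>s > - c * R\<close> by simp
              then have "(-c*R)^2 \<le> s^2" using \<open>s > - c * R\<close> \<open>-c*R \<ge> 0\<close> by (intro power_mono) auto
              then have "(-c * q)^2 \<le> (s * p)^2"
              proof -
                assume h: "(-c*R)^2 \<le> s^2"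
                have e1: "(-c * q)^2 = c^2 * R^2 - c^2 * s^2"
                  by (simp add: power_mult_distrib qq right_diff_distrib)
                have e2: "(s * p)^2 = s^2 - c^2 * s^2"
                  by (simp add: power_mult_distrib pp right_diff_distrib mult.commute)
                have "c^2 * R^2 \<le> s^2" using h by (simp add: power_mult_distrib)
                then show ?thesis unfolding e1 e2 by simp
              qed
              moreover have "0 \<le> s * p" using \<open>s \<ge> 0\<close> p0 by simp
              ultimately have "-c * q \<le> s * p" by (rule power2_le_imp_le)
              then show ?thesis by simp
            next
              case False
              with \<open>\<not> (c \<ge> 0 \<and> s \<ge> 0)\<close> have "s < 0" "c \<ge> 0" by auto
              have "c * R > - s" using C by simp
              then have "(-s)^2 \<le> (c*R)^2" using \<open>s < 0\<close> by (intro power_mono) auto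
              then have "(-s * p)^2 \<le> (c * q)^2"
              proof -
                assume h: "(-s)^2 \<le> (c*R)^2"
                have e1: "(c * q)^2 = c^2 * R^2 - c^2 * s^2"
                  by (simp add: power_mult_distrib qq right_diff_distrib)
                have e2: "(-s * p)^2 = s^2 - c^2 * s^2"
                  by (simp add: power_mult_distrib pp right_diff_distrib mult.commute)
                have "s^2 \<le> c^2 * R^2" using h by (simp add: power_mult_distrib)
                then show ?thesis unfolding e1 e2 by simp
              qed
              moreover have "0 \<le> c * q" using \<open>c \<ge> 0\<close> q0 by simp
              ultimately have "-s * p \<le> c * q" by (rule power2_le_imp_le)
              then show ?thesis by simp
            qed
          qed
          moreover have "t = (c * q + s * p) / q" using q1 by (simp add: t_def add_divide_distrib)
          ultimately show ?thesis using q1 by simp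
        qed
        have dt: "dual_obj a lam d y t = V"
        proof -
          have "1 - 2*t*c + t^2 = (R * p / q)^2"
          proof -
            have "1 - 2*t*c + t^2 = (1 - c^2) + (s*p/q)^2"
              unfolding t_def by (simp add: power2_eq_square algebra_simps)
            also have "\<dots> = p^2 + s^2 * p^2 / q^2" by (simp add: pp power_mult_distrib power_divide)
            finally have "1 - 2*t*c + t^2 = p^2 + s^2 * p^2 / q^2" .
            also have "\<dots> = p^2 * q^2 / q^2 + p^2 * s^2 / q^2"
              using q1 by simp
            also have "\<dots> = p^2 * (q^2 + s^2) / q^2" by (simp add: distrib_left add_divide_distrib)
            also have "\<dots> = (R * p / q)^2" using qq by (simp add: power_mult_distrib power_divide)
            finally show ?thesis .
          qed
          then have "sqrt (1 - 2*t*c + t^2) = R * p / q" using R0 p0 q1 by simp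
          then have "dual_obj a lam d y t = R * p / q * R - t * s" by (simp add: dob)
          also have "\<dots> = p * (R^2 - s^2) / q - s * c" unfolding t_def
            by (simp add: power2_eq_square diff_divide_distrib algebra_simps)
          also have "\<dots> = q * p - s * c" unfolding qq[symmetric] using q1 by (simp add: power2_eq_square)
          finally show ?thesis using Vv2 by simp
        qed
        have ub: "lam \<bullet> x \<le> V" if "primal_feasible a d y x" for x
          using weak_dual[OF that t0, of lam] dt by simp
        have pv: "primal_value a lam d y = V" by (rule primal_val[OF xf xv ub])
        have dopt: "\<forall>u\<ge>0. dual_obj a lam d y t \<le> dual_obj a lam d y u"
          using weak_dual[OF xf, of _ lam] xv dt by simp
        have dv: "dual_value a lam d y = V" unfolding dual_value_def
          by (rule cInf_eq_minimum) (use dopt dt t0 in auto)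
        have th: "theta_opt a lam d y = ereal t"
        proof -
          have "theta_opt a lam d y = ereal c + ereal s * (ereal p / ereal q)"
            using C unfolding theta_opt_def c_def[symmetric] s_def[symmetric] R_def[symmetric]
              p_def[symmetric] q_def[symmetric] by simp
          also have "\<dots> = ereal t" using q1 by (simp add: t_def)
          finally show ?thesis .
        qed
        show ?thesis using pv dv dopt xf xv ub dualfun t0
          by (auto simp: xo th primal_optimal_def dual_optimal_def V_def)
      next
        case q1: False
        then have q00: "q = 0" using q0 by simp
        then have "R^2 = s^2" using qq by simp
        then have sR: "s = R \<or> s = - R" by (auto simp: power2_eq_iff)
        have "c < 1"
        proof (rule ccontr)
          assume "\<not> c < 1"
          then have "1 \<le> c^2" by simp
          then show False using c1 by simp
        qed
        have sR1: "s = R" and Rp: "R > 0"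
        proof -
          have "c * R \<le> 1 * R" using \<open>c < 1\<close> R0 by (intro mult_right_mono) auto
          then show "s = R" using sR C by auto
          then show "R > 0" using C R0 by (cases "R = 0") auto
        qed
        have ub: "lam \<bullet> x \<le> V" if "primal_feasible a d y x" for x
        proof -
          have x: "norm x \<le> R" "a \<bullet> x \<le> - R" using that sR1 by (auto simp: feas)
          have "- (a \<bullet> x) \<le> norm a * norm x" using Cauchy_Schwarz_ineq2[of a x] by simp
          then have "a \<bullet> x \<ge> - R" using x assms(1) by simp
          have "(norm (x + R *\<^sub>R a))^2 = (norm x)^2 + 2 * R * (a \<bullet> x) + R^2"
            unfolding power2_norm_eq_inner
            by (simp add: inner_add_left inner_add_right inner_commute[of x a] aa power2_eq_square algebra_simps)
          also have "\<dots> \<le> R^2 + 2 * R * (- R) + R^2"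
            using x R0 Rp by (intro add_mono power_mono mult_left_mono) auto
          finally have "(norm (x + R *\<^sub>R a))^2 \<le> 0" by (simp add: power2_eq_square)
          then have "x + R *\<^sub>R a = 0" by simp
          then have "x = - R *\<^sub>R a" by (simp add: add_eq_0_iff2)
          then show ?thesis using Vv2 q00 sR1 by (simp add: c_def)
        qed
        have pv: "primal_value a lam d y = V" by (rule primal_val[OF xf xv ub])
        have lim: "(dual_obj a lam d y \<longlongrightarrow> V) at_top"
        proof -
          have "((\<lambda>t. sqrt (1 - 2*t*c + t^2) * R - t * R) \<longlongrightarrow> - R * c) at_top"
            by real_asymp
          moreover have "V = - R * c" using Vv2 q00 sR1 by simp
          ultimately show ?thesis using sR1 by (simp add: dob[abs_def])
        qed
        have lb: "\<forall>u\<ge>0. V \<le> dual_obj a lam d y u"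
          using weak_dual[OF xf, of _ lam] xv by simp
        have dv: "dual_value a lam d y = V" unfolding dual_value_def
        proof (rule cInf_eq_non_empty)
          show "{dual_obj a lam d y \<theta> |\<theta>. 0 \<le> \<theta>} \<noteq> {}" by auto
          show "\<And>x. x \<in> {dual_obj a lam d y \<theta> |\<theta>. 0 \<le> \<theta>} \<Longrightarrow> V \<le> x" using lb by auto
          fix z assume H: "\<And>x. x \<in> {dual_obj a lam d y \<theta> |\<theta>. 0 \<le> \<theta>} \<Longrightarrow> z \<le> x"
          have A: "\<forall>t\<ge>0. z \<le> dual_obj a lam d y t" using H by blast
          have "\<forall>\<^sub>F t in at_top. z \<le> dual_obj a lam d y t"
            by (rule eventually_mono[OF eventually_ge_at_top[of "0::real"]]) (use A in auto)
          then show "z \<le> V" using lim by (intro tendsto_lowerbound) auto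
        qed
        have th: "theta_opt a lam d y = \<infinity>"
        proof -
          have "theta_opt a lam d y = ereal c + ereal s * (ereal p / ereal q)"
            using C unfolding theta_opt_def c_def[symmetric] s_def[symmetric] R_def[symmetric]
              p_def[symmetric] q_def[symmetric] by simp
          also have "\<dots> = \<infinity>" using q00 p0 sR1 Rp by simp
          finally show ?thesis .
        qed
        show ?thesis using pv dv lim lb xf xv ub dualfun
          by (auto simp: xo th primal_optimal_def dual_optimal_def V_def)
      qed
    next
      case c1: False
      moreover have "c^2 \<le> 1" using cb by (simp add: abs_square_le_1)
      ultimately have "c^2 = 1" by simp
      then have "c = 1 \<or> c = -1" by (simp add: power2_eq_1_iff)
      moreover have "c \<noteq> -1" using C sb by auto
      ultimately have c1': "c = 1" by simp
      then have la: "lam = a" by (rule lam_a)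
      have Vv3: "V = - s" using Vv c1' by simp
      have xf: "primal_feasible a d y (- s *\<^sub>R a)" using sb assms(1) aa by (simp add: feas)
      have xv: "lam \<bullet> (- s *\<^sub>R a) = V" using la aa Vv3 by simp
      have ub: "lam \<bullet> x \<le> V" if "primal_feasible a d y x" for x
        using that la Vv3 by (simp add: feas)
      have "primal_value a lam d y = V" by (rule primal_val[OF xf xv ub])
      then show ?thesis using la by (simp add: V_def)
    qed
  qed
qed

end
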